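(* Let $i,j,k$ be distinct jobs such that $(i,k)$ and $(j,k)$ are red pairs. Then $D^*(i,j)\ge t_k$ and, in the schedule produced by $1$-SORT, $D(i,j)\le\left(1+\frac{1}{\mu\nu}\right)D^*(i,j)$.
   Context: Setting: single machine, jobs $J=\{1,\dots,n\}$, each job $j$ with test time $t_j\ge0$ and processing time $p_j\ge0$ (revealed only when the test is executed); each job's test must be executed before its processing part, which may start any time after the test; operations are non-preemptive and the machine does one at a time. $\sigma_j=t_j+p_j$, $m_j=\max\{t_j,p_j\}$. Standing assumption (general position): no two of the $3n$ numbers $t_j,p_j,\sigma_j$ are equal. Algorithm $1$-SORT: keep a priority queue of available operations, initially the test of every job $j$ with priority $t_j$; repeatedly remove a minimum-priority operation and execute it immediately; after executing the test of $j$, insert the processing part of $j$ with priority $p_j$. For distinct jobs $j,k$, let $d_{k,j}$ be the total amount of time during which operations of $k$ are executed before the completion time of $j$, and $D(j,k)=d_{j,k}+d_{k,j}$, evaluated for the $1$-SORT schedule; $D^*(j,k)=\min\{\sigma_j,\sigma_k\}$. Fix constants $\mu>1$ and $0<\nu<1$ with $\mu\nu>1$ and $1+\frac1\mu\le\nu+\nu^2$. A job $j$ is imbalanced if $m_j\ge\mu\min\{t_j,p_j\}$. For distinct jobs $j,k$, the ordered pair $(j,k)$ is a red pair if $j$ is imbalanced, $m_j\ge t_k\ge\nu m_j$, and $p_k\ge\nu t_k$. *)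

theory Defs
  imports Complex_Main
begin

datatype 'a operation = Test 'a | Proc 'a

fun op_job :: "'a operation \<Rightarrow> 'a" where
  "op_job (Test j) = j" | "op_job (Proc j) = j"

text \<open>Length of an operation (also its priority in 1-SORT).\<close>
fun op_len :: "('a \<Rightarrow> real) \<Rightarrow> ('a \<Rightarrow> real) \<Rightarrow> 'a operation \<Rightarrow> real" where
  "op_len t p (Test j) = t j" | "op_len t p (Proc j) = p j"

definition sigma :: "('a \<Rightarrow> real) \<Rightarrow> ('a \<Rightarrow> real) \<Rightarrow> 'a \<Rightarrow> real" where
  "sigma t p j = t j + p j"

definition mval :: "('a \<Rightarrow> real) \<Rightarrow> ('a \<Rightarrow> real) \<Rightarrow> 'a \<Rightarrow> real" where
  "mval t p j = max (t j) (p j)"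

text \<open>General position: the 3n numbers t_j, p_j, sigma_j (j in J) are pairwise distinct.\<close>
definition general_position :: "'a set \<Rightarrow> ('a \<Rightarrow> real) \<Rightarrow> ('a \<Rightarrow> real) \<Rightarrow> bool" where
  "general_position J t p \<longleftrightarrow>
     inj_on (\<lambda>(c::nat, j). if c = 0 then t j else if c = 1 then p j else sigma t p j)
            ({0, 1, 2} \<times> J)"

definition sort_step :: "('a \<Rightarrow> real) \<Rightarrow> ('a \<Rightarrow> real) \<Rightarrow>
    'a operation set \<times> 'a operation list \<Rightarrow> 'a operation set \<times> 'a operation list" where
  "sort_step t p st =
     (let Q = fst st; S = snd st; x0 = arg_min (op_len t p) (\<lambda>x. x \<in> Q) in
      ((Q - {x0}) \<union> (case x0 of Test j \<Rightarrow> {Proc j} | Proc j \<Rightarrow> {}), S @ [x0]))"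

text \<open>The sequence of operations executed by 1-SORT (all 2n operations; executed
  back to back without idle time since every operation is executed immediately).\<close>
definition one_sort :: "'a set \<Rightarrow> ('a \<Rightarrow> real) \<Rightarrow> ('a \<Rightarrow> real) \<Rightarrow> 'a operation list" where
  "one_sort J t p = snd ((sort_step t p ^^ (2 * card J)) (Test ` J, []))"

text \<open>d_{k,j}: total time during which operations of k are executed before the completion
  time of j, i.e. before the end of the processing part of j (the operations preceding
  Proc j in the schedule, plus Proc j itself, which belongs to j and not to k).\<close>
definition dd :: "'a set \<Rightarrow> ('a \<Rightarrow> real) \<Rightarrow> ('a \<Rightarrow> real) \<Rightarrow> 'a \<Rightarrow> 'a \<Rightarrow> real" where
  "dd J t p k j = sum_list (map (op_len t p)
      (filter (\<lambda>x. op_job x = k) (takeWhile (\<lambda>x. x \<noteq> Proc j) (one_sort J t p))))"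

definition DD :: "'a set \<Rightarrow> ('a \<Rightarrow> real) \<Rightarrow> ('a \<Rightarrow> real) \<Rightarrow> 'a \<Rightarrow> 'a \<Rightarrow> real" where
  "DD J t p j k = dd J t p j k + dd J t p k j"

definition Dstar :: "('a \<Rightarrow> real) \<Rightarrow> ('a \<Rightarrow> real) \<Rightarrow> 'a \<Rightarrow> 'a \<Rightarrow> real" where
  "Dstar t p j k = min (sigma t p j) (sigma t p k)"

definition imbalanced :: "real \<Rightarrow> ('a \<Rightarrow> real) \<Rightarrow> ('a \<Rightarrow> real) \<Rightarrow> 'a \<Rightarrow> bool" where
  "imbalanced \<mu> t p j \<longleftrightarrow> mval t p j \<ge> \<mu> * min (t j) (p j)"

definition red_pair :: "real \<Rightarrow> real \<Rightarrow> ('a \<Rightarrow> real) \<Rightarrow> ('a \<Rightarrow> real) \<Rightarrow> 'a \<Rightarrow> 'a \<Rightarrow> bool" where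
  "red_pair \<mu> \<nu> t p j k \<longleftrightarrow> j \<noteq> k \<and> imbalanced \<mu> t p j \<and>
     mval t p j \<ge> t k \<and> t k \<ge> \<nu> * mval t p j \<and> p k \<ge> \<nu> * t k"

end

theory Submission
  imports Defs
begin

definition key :: "('a \<Rightarrow> real) \<Rightarrow> ('a \<Rightarrow> real) \<Rightarrow> 'a operation \<Rightarrow> real" where
  "key t p x = (case x of Test j \<Rightarrow> t j | Proc j \<Rightarrow> max (t j) (p j))"

definition pend :: "'a operation set \<Rightarrow> 'a operation set" where
  "pend Q = Q \<union> {Proc l | l. Test l \<in> Q}"

definition Inv :: "'a set \<Rightarrow> ('a \<Rightarrow> real) \<Rightarrow> ('a \<Rightarrow> real) \<Rightarrow> 'a operation set \<Rightarrow> 'a operation list \<Rightarrow> bool" where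
 "Inv J t p Q S \<longleftrightarrow>
    finite Q \<and> set S \<union> pend Q = Test ` J \<union> Proc ` J \<and> set S \<inter> pend Q = {} \<and> distinct S \<and>
    sorted_wrt (\<lambda>x y. key t p x \<le> key t p y) S \<and>
    (\<forall>x\<in>set S. \<forall>y\<in>pend Q. key t p x \<le> key t p y) \<and>
    (\<forall>l. Proc l \<in> Q \<longrightarrow> Test l \<in> set S)"

lemma keyge: "op_len t p y \<le> key t p y"
  by (cases y) (auto simp: key_def)

lemma step:
  assumes inv: "Inv J t p Q S" and ne: "Q \<noteq> {}"
  shows "Inv J t p (fst (sort_step t p (Q,S))) (snd (sort_step t p (Q,S)))
       \<and> length (snd (sort_step t p (Q,S))) = Suc (length S)
       \<and> pend (fst (sort_step t p (Q,S))) = pend Q - {arg_min (op_len t p) (\<lambda>x. x \<in> Q)}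
       \<and> arg_min (op_len t p) (\<lambda>x. x \<in> Q) \<in> pend Q"
proof -
  define x0 where "x0 = arg_min (op_len t p) (\<lambda>x. x \<in> Q)"
  have fin: "finite Q" using inv unfolding Inv_def by auto
  have x0Q: "x0 \<in> Q" using arg_min_if_finite(1)[OF fin ne, of "op_len t p"] unfolding x0_def arg_min_on_def .
  have x0min: "\<And>y. y \<in> Q \<Longrightarrow> op_len t p x0 \<le> op_len t p y"
    using arg_min_least[OF fin ne] unfolding x0_def arg_min_on_def by blast
  have x0P: "x0 \<in> pend Q" using x0Q unfolding pend_def by auto
  define Q' where "Q' = (Q - {x0}) \<union> (case x0 of Test j \<Rightarrow> {Proc j} | Proc j \<Rightarrow> {})"
  have ss: "sort_step t p (Q,S) = (Q', S @ [x0])"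
    unfolding sort_step_def Q'_def x0_def by (simp add: Let_def)
  have lenge: "\<And>y. y \<in> pend Q \<Longrightarrow> op_len t p x0 \<le> key t p y"
  proof -
    fix y assume "y \<in> pend Q"
    then consider "y \<in> Q" | l where "y = Proc l" "Test l \<in> Q" unfolding pend_def by auto
    then show "op_len t p x0 \<le> key t p y"
    proof cases
      case 1 thus ?thesis using x0min[of y] keyge[of t p y] by simp
    next
      case 2 thus ?thesis using x0min[of "Test l"] by (simp add: key_def)
    qed
  qed
  have x0key: "\<forall>y\<in>pend Q. key t p x0 \<le> key t p y"
  proof (cases x0)
    case (Test j)
    then show ?thesis using lenge by (simp add: key_def)
  next
    case (Proc j)
    hence "Test j \<in> set S" using inv x0Q unfolding Inv_def by auto
    hence "\<forall>y\<in>pend Q. t j \<le> key t p y" using inv unfolding Inv_def by (force simp: key_def)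
    then show ?thesis using lenge Proc by (simp add: key_def)
  qed
  have pend': "pend Q' = pend Q - {x0}"
  proof (cases x0)
    case (Test j)
    then show ?thesis unfolding Q'_def pend_def using x0Q by auto
  next
    case (Proc j)
    hence "Test j \<in> set S" using inv x0Q unfolding Inv_def by auto
    hence "Test j \<notin> Q" using inv unfolding Inv_def pend_def by auto
    then show ?thesis unfolding Q'_def pend_def using Proc by auto
  qed
  have i2: "set S \<union> pend Q = Test ` J \<union> Proc ` J" and i3: "set S \<inter> pend Q = {}"
    and i4: "distinct S" and i5: "sorted_wrt (\<lambda>x y. key t p x \<le> key t p y) S"
    and i6: "\<forall>x\<in>set S. \<forall>y\<in>pend Q. key t p x \<le> key t p y"
    and i7: "\<forall>l. Proc l \<in> Q \<longrightarrow> Test l \<in> set S"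
    using inv unfolding Inv_def by blast+
  have inv': "Inv J t p Q' (S @ [x0])"
    unfolding Inv_def
  proof (intro conjI)
    show "finite Q'" using fin unfolding Q'_def by (cases x0) auto
    have "set (S @ [x0]) \<union> pend Q' = set S \<union> pend Q"
      using x0P pend' by auto
    thus "set (S @ [x0]) \<union> pend Q' = Test ` J \<union> Proc ` J" using i2 by simp
    show "set (S @ [x0]) \<inter> pend Q' = {}" using i3 pend' by auto
    show "distinct (S @ [x0])" using i3 i4 x0P by auto
    show "sorted_wrt (\<lambda>x y. key t p x \<le> key t p y) (S @ [x0])"
      using i5 i6 x0P by (auto simp: sorted_wrt_append)
    show "\<forall>x\<in>set (S @ [x0]). \<forall>y\<in>pend Q'. key t p x \<le> key t p y"
      using i6 x0key pend' by auto
    show "\<forall>l. Proc l \<in> Q' \<longrightarrow> Test l \<in> set (S @ [x0])"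
      using i7 unfolding Q'_def by (cases x0) auto
  qed
  show ?thesis using inv' ss pend' x0P unfolding x0_def by simp
qed

lemma pend_init: "pend (Test ` J) = Test ` J \<union> Proc ` J"
  unfolding pend_def by auto

lemma iter:
  assumes "finite J" "s \<le> 2 * card J"
  shows "Inv J t p (fst ((sort_step t p ^^ s) (Test ` J, []))) (snd ((sort_step t p ^^ s) (Test ` J, [])))
    \<and> card (pend (fst ((sort_step t p ^^ s) (Test ` J, [])))) = 2 * card J - s"
  using assms(2)
proof (induction s)
  case 0
  have "card (Test ` J \<union> Proc ` J) = 2 * card J"
    using assms(1) by (subst card_Un_disjoint) (auto simp: card_image inj_on_def)
  moreover have "Inv J t p (Test ` J) []" using assms(1) unfolding Inv_def pend_init by auto
  ultimately show ?case by (simp add: pend_init)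
next
  case (Suc s)
  obtain Q S where qs: "(sort_step t p ^^ s) (Test ` J, []) = (Q, S)" by (cases "(sort_step t p ^^ s) (Test ` J, [])")
  have IH: "Inv J t p Q S" "card (pend Q) = 2 * card J - s" using Suc qs by auto
  have finP: "finite (pend Q)" using IH(1) assms(1) unfolding Inv_def by (metis finite_Un finite_imageI)
  have "pend Q \<noteq> {}" using IH(2) Suc.prems by auto
  hence ne: "Q \<noteq> {}" unfolding pend_def by auto
  note st = step[OF IH(1) ne]
  have c1: "card (pend Q - {arg_min (op_len t p) (\<lambda>x. x \<in> Q)}) = card (pend Q) - 1"
    using st finP by (meson card_Diff_singleton)
  have eq: "(sort_step t p ^^ Suc s) (Test ` J, []) = sort_step t p (Q,S)" using qs by simp
  have c2: "card (pend (fst (sort_step t p (Q,S)))) = 2 * card J - Suc s"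
    using st c1 IH(2) by simp
  show ?case unfolding eq using st c2 by blast
qed

lemma final:
  assumes "finite J"
  shows "distinct (one_sort J t p) \<and> sorted_wrt (\<lambda>x y. key t p x \<le> key t p y) (one_sort J t p)
    \<and> set (one_sort J t p) = Test ` J \<union> Proc ` J"
proof -
  obtain Q S where qs: "(sort_step t p ^^ (2 * card J)) (Test ` J, []) = (Q, S)"
    by (cases "(sort_step t p ^^ (2 * card J)) (Test ` J, [])")
  have I: "Inv J t p Q S" "card (pend Q) = 0" using iter[OF assms order_refl, of t p] qs by auto
  have finP: "finite (pend Q)" using I(1) assms unfolding Inv_def by (metis finite_Un finite_imageI)
  have "pend Q = {}" using I(2) finP by simp
  then show ?thesis using I(1) qs unfolding Inv_def one_sort_def by auto
qed

lemma before:
  assumes "sorted_wrt R S" "z \<in> set S" "y \<in> set (takeWhile (\<lambda>x. x \<noteq> z) S)"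
  shows "R y z"
proof -
  obtain us vs where S: "S = us @ z # vs" "z \<notin> set us" using split_list_first[OF assms(2)] by blast
  have "takeWhile (\<lambda>x. x \<noteq> z) S = us" using S by (simp add: takeWhile_append2 takeWhile_tail) (metis)
  then show ?thesis using assms S by (auto simp: sorted_wrt_append)
qed

lemma sum_filter_le:
  assumes "distinct xs" "set (filter (\<lambda>x. op_job x = a) xs) \<subseteq> A" "A \<subseteq> {Test a, Proc a}"
    "\<forall>x\<in>A. op_len t p x \<ge> 0"
  shows "sum_list (map (op_len t p) (filter (\<lambda>x. op_job x = a) xs)) \<le> sum (op_len t p) A"
proof -
  have fA: "finite A" using assms(3) finite_subset by blast
  have "sum_list (map (op_len t p) (filter (\<lambda>x. op_job x = a) xs)) = sum (op_len t p) (set (filter (\<lambda>x. op_job x = a) xs))"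
    using assms(1) by (simp add: sum_list_distinct_conv_sum_set)
  also have "\<dots> \<le> sum (op_len t p) A" using fA assms(2,4) by (intro sum_mono2) auto
  finally show ?thesis .
qed


lemma num:
  fixes ti pi tj pj tk mu nu :: real
  assumes "ti \<ge> 0" "pi \<ge> 0" "tj \<ge> 0" "pj \<ge> 0" "mu > 1" "0 < nu" "nu < 1" "mu * nu > 1"
    and hi: "max ti pi \<ge> mu * min ti pi" and hj: "max tj pj \<ge> mu * min tj pj"
    and rik: "max ti pi \<ge> tk" and rjk: "tk \<ge> nu * max tj pj"
    and ord: "max ti pi < max tj pj"
  shows "ti + pi + (if tj < max ti pi then tj else 0) \<le> (1 + 1/(mu*nu)) * min (ti+pi) (tj+pj)"
proof -
  define c where "c = 1/(mu*nu)"
  define mi where "mi = max ti pi"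
  have c0: "c > 0" using assms unfolding c_def by simp
  have cmn: "c * (mu*nu) = 1" using assms unfolding c_def by simp
  have mi0: "mi \<ge> 0" using assms unfolding mi_def by simp
  have mini: "min ti pi \<le> c * mi"
  proof -
    have "mu * min ti pi \<le> mi" using hi mi_def by simp
    hence "(mu*nu) * min ti pi \<le> mi" using assms mi0
      by (smt (verit) min_def mult_le_cancel_right1 mult_left_mono mult.commute mult_nonneg_nonneg)
    hence "c * ((mu*nu) * min ti pi) \<le> c * mi" using c0 by (simp add: mult_left_mono)
    thus ?thesis using cmn by (simp add: mult.assoc[symmetric])
  qed
  have si: "ti + pi \<le> (1 + c) * mi" using mini unfolding mi_def by (simp add: algebra_simps min_def max_def split: if_splits)
  show ?thesis
  proof (cases "tj < mi")
    case False
    have "ti + pi \<le> (1+c) * (tj + pj)"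
    proof -
      have "(1+c) * mi \<le> (1+c) * (tj+pj)" using False c0 assms by (intro mult_left_mono) auto
      thus ?thesis using si by simp
    qed
    moreover have "ti + pi \<le> (1+c) * (ti+pi)" using c0 assms by (simp add: algebra_simps)
    ultimately show ?thesis using False unfolding c_def[symmetric] mi_def[symmetric] by simp
  next
    case True
    have mj: "max tj pj = pj" "min tj pj = tj" using True ord mi_def by (auto simp: max_def min_def split: if_splits)
    have "mu * tj \<le> pj" using hj mj by simp
    moreover have "nu * pj \<le> mi" using rjk rik mj mi_def by simp
    ultimately have "mu * nu * tj \<le> mi" using assms
      by (smt (verit, best) mult.assoc mult.commute mult_left_mono)
    hence "c * (mu*nu*tj) \<le> c * mi" using c0 by (simp add: mult_left_mono)
    moreover have "c * (mu*nu*tj) = tj" using cmn by (metis mult.assoc mult_1)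
    ultimately have tjc: "tj \<le> c * mi" by simp
    have "c * mi \<le> c * (ti + pi)" using c0 assms by (intro mult_left_mono) (auto simp: mi_def)
    hence A: "ti + pi + tj \<le> (1+c) * (ti+pi)" using tjc by (simp add: algebra_simps)
    have "(1+c)*mi \<le> (1+c)*pj" using ord mj c0 mi_def by (intro mult_left_mono) auto
    moreover have "0 \<le> c * tj" using c0 assms by simp
    ultimately have B: "ti + pi + tj \<le> (1+c) * (tj+pj)" using si by (simp add: algebra_simps)
    show ?thesis using A B True unfolding c_def[symmetric] mi_def[symmetric] by simp
  qed
qed

lemma core:
  fixes J :: "'a set" and t p :: "'a \<Rightarrow> real"
  assumes fin: "finite J" and nn: "\<forall>x\<in>J. t x \<ge> 0 \<and> p x \<ge> 0"
    and "\<mu> > 1" and "0 < \<nu>" and "\<nu> < 1" and "\<mu> * \<nu> > 1"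
    and iJ: "i \<in> J" and jJ: "j \<in> J" and ij: "i \<noteq> j"
    and hi: "imbalanced \<mu> t p i" and hj: "imbalanced \<mu> t p j"
    and rik: "mval t p i \<ge> tk" and rjk: "tk \<ge> \<nu> * mval t p j"
    and ord: "mval t p i < mval t p j" and tjm: "t j \<noteq> mval t p i"
  shows "DD J t p i j \<le> (1 + 1 / (\<mu> * \<nu>)) * Dstar t p i j"
proof -
  define S where "S = one_sort J t p"
  have F: "distinct S" "sorted_wrt (\<lambda>x y. key t p x \<le> key t p y) S" "set S = Test ` J \<union> Proc ` J"
    using final[OF fin, of t p] unfolding S_def by auto
  have jobs: "\<And>x a. op_job x = a \<Longrightarrow> x \<in> {Test a, Proc a}" by (case_tac x) auto
  have d1: "dd J t p i j \<le> sum (op_len t p) {Test i, Proc i}"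
    unfolding dd_def S_def[symmetric]
  proof (rule sum_filter_le)
    show "distinct (takeWhile (\<lambda>x. x \<noteq> Proc j) S)" using F(1) by simp
    show "set (filter (\<lambda>x. op_job x = i) (takeWhile (\<lambda>x. x \<noteq> Proc j) S)) \<subseteq> {Test i, Proc i}"
      using jobs by auto
    show "{Test i, Proc i} \<subseteq> {Test i, Proc i}" by simp
    show "\<forall>x\<in>{Test i, Proc i}. 0 \<le> op_len t p x" using nn iJ by auto
  qed
  have s1: "sum (op_len t p) {Test i, Proc i} = t i + p i" by simp
  define A where "A = (if t j < mval t p i then {Test j} else {})"
  have sub: "set (filter (\<lambda>x. op_job x = j) (takeWhile (\<lambda>x. x \<noteq> Proc i) S)) \<subseteq> A"
  proof
    fix y assume y: "y \<in> set (filter (\<lambda>x. op_job x = j) (takeWhile (\<lambda>x. x \<noteq> Proc i) S))"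
    have "Proc i \<in> set S" using F(3) iJ by auto
    hence ky: "key t p y \<le> key t p (Proc i)" using y before[OF F(2)] by auto
    from y have "y = Test j \<or> y = Proc j" using jobs[of y j] by auto
    then show "y \<in> A"
    proof
      assume "y = Proc j" hence False using ky ord by (simp add: key_def mval_def max_def split: if_splits)
      thus ?thesis by simp
    next
      assume "y = Test j" thus ?thesis using ky tjm by (auto simp: key_def mval_def A_def)
    qed
  qed
  have d2: "dd J t p j i \<le> sum (op_len t p) A"
    unfolding dd_def S_def[symmetric]
  proof (rule sum_filter_le)
    show "distinct (takeWhile (\<lambda>x. x \<noteq> Proc i) S)" using F(1) by simp
    show "set (filter (\<lambda>x. op_job x = j) (takeWhile (\<lambda>x. x \<noteq> Proc i) S)) \<subseteq> A" by (rule sub)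
    show "A \<subseteq> {Test j, Proc j}" by (simp add: A_def)
    show "\<forall>x\<in>A. 0 \<le> op_len t p x" using nn jJ by (auto simp: A_def)
  qed
  have s2: "sum (op_len t p) A = (if t j < max (t i) (p i) then t j else 0)"
    by (simp add: A_def mval_def)
  have N: "t i + p i + (if t j < max (t i) (p i) then t j else 0)
       \<le> (1 + 1/(\<mu>*\<nu>)) * min (t i + p i) (t j + p j)"
    apply (rule num[where tk=tk])
    using assms by (auto simp: imbalanced_def mval_def)
  show ?thesis using d1 d2 s1 s2 N unfolding DD_def Dstar_def sigma_def by linarith
qed

lemma gp:
  assumes "general_position J t p" "a \<in> J" "b \<in> J" "a \<noteq> b"
  shows "t a \<noteq> t b" "t a \<noteq> p b" "p a \<noteq> p b" "t a \<noteq> p a"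
proof -
  let ?f = "(\<lambda>(c::nat, j). if c = 0 then t j else if c = 1 then p j else sigma t p j)"
  have inj: "inj_on ?f ({0, 1, 2} \<times> J)" using assms(1) unfolding general_position_def .
  show "t a \<noteq> t b" using inj_onD[OF inj, of "(0,a)" "(0,b)"] assms by auto
  show "t a \<noteq> p b" using inj_onD[OF inj, of "(0,a)" "(1,b)"] assms by auto
  show "p a \<noteq> p b" using inj_onD[OF inj, of "(1,a)" "(1,b)"] assms by auto
  show "t a \<noteq> p a" using inj_onD[OF inj, of "(0,a)" "(1,a)"] assms by auto
qed

theorem mainTheorem8:
  fixes J :: "'a set" and t p :: "'a \<Rightarrow> real" and \<mu> \<nu> :: real and i j k :: 'a
  assumes "finite J"
    and "\<forall>x\<in>J. t x \<ge> 0 \<and> p x \<ge> 0"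
    and "general_position J t p"
    and "\<mu> > 1" and "0 < \<nu>" and "\<nu> < 1" and "\<mu> * \<nu> > 1"
    and "1 + 1 / \<mu> \<le> \<nu> + \<nu>^2"
    and "i \<in> J" and "j \<in> J" and "k \<in> J"
    and "i \<noteq> j" and "i \<noteq> k" and "j \<noteq> k"
    and "red_pair \<mu> \<nu> t p i k" and "red_pair \<mu> \<nu> t p j k"
  shows "Dstar t p i j \<ge> t k \<and> DD J t p i j \<le> (1 + 1 / (\<mu> * \<nu>)) * Dstar t p i j"
proof
  have ri: "imbalanced \<mu> t p i" "mval t p i \<ge> t k" "t k \<ge> \<nu> * mval t p i"
    using assms(15) unfolding red_pair_def by auto
  have rj: "imbalanced \<mu> t p j" "mval t p j \<ge> t k" "t k \<ge> \<nu> * mval t p j"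
    using assms(16) unfolding red_pair_def by auto
  have "sigma t p i \<ge> mval t p i" "sigma t p j \<ge> mval t p j"
    using assms(2,9,10) unfolding sigma_def mval_def by auto
  thus "Dstar t p i j \<ge> t k" using ri rj unfolding Dstar_def by simp
  have g1: "t i \<noteq> t j" "t i \<noteq> p j" "p i \<noteq> p j" "t j \<noteq> p i"
    using gp[OF assms(3,9,10,12)] gp[OF assms(3,10,9)] assms(12) by auto
  have g2: "t i \<noteq> p i" "t j \<noteq> p j" using gp[OF assms(3,9,10,12)] gp[OF assms(3,10,9)] assms(12) by auto
  have mne: "mval t p i \<noteq> mval t p j" using g1 unfolding mval_def by (auto simp: max_def)
  have tjm: "t j \<noteq> mval t p i" and tim: "t i \<noteq> mval t p j" using g1 unfolding mval_def by (auto simp: max_def)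
  show "DD J t p i j \<le> (1 + 1 / (\<mu> * \<nu>)) * Dstar t p i j"
  proof (cases "mval t p i < mval t p j")
    case True
    show ?thesis by (rule core[OF assms(1,2,4,5,6,7,9,10,12) ri(1) rj(1) ri(2) rj(3) True tjm])
  next
    case False
    hence "mval t p j < mval t p i" using mne by simp
    have "DD J t p j i \<le> (1 + 1 / (\<mu> * \<nu>)) * Dstar t p j i"
      by (rule core[OF assms(1,2,4,5,6,7,10,9) _ rj(1) ri(1) rj(2) ri(3) \<open>mval t p j < mval t p i\<close> tim])
        (use assms(12) in auto)
    moreover have "DD J t p j i = DD J t p i j" unfolding DD_def by simp
    moreover have "Dstar t p j i = Dstar t p i j" unfolding Dstar_def by (simp add: min.commute)
    ultimately show ?thesis by simp
  qed
qed

end
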